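(* In the modified $T$-period game described in the context, under (A5), for any strategy of the seller, the buyer's optimal strategy is given by a threshold rule: at every buyer history $\hat h_t$ (consisting of the public history including the current period-$t$ price together with the buyer's realized values $\theta_1,\dots,\theta_t$), the optimal decision is $x_t=\mathbf{1}_{\theta_t\ge k_t}$, where the threshold $k_t$ depends only on the public history.
   Context: Modified game. A seller sells one nondurable good in each period $t\in\{1,\dots,T\}$ (cost $0$) to a buyer who privately observes $\theta_t$ at the beginning of period $t$. In each period $t$ in which she has not yet committed, the seller either sets a price $p_t$ for period $t$ only, or publicly commits to a sequence $(p_t,\dots,p_T)$ of prices for the items of periods $t,\dots,T$; the buyer then decides $x_t\in\{0,1\}$. Seller's payoff $\sum_t\delta^{t-1}x_tp_t$, buyer's payoff $\sum_t\delta^{t-1}x_t(\theta_t-p_t)$, $\delta\in(0,1]$. The seller's strategy maps public histories (past prices, commitments and purchase decisions) to distributions over actions. (A5) Log-concave AR(1): $\theta_1\sim F_1$, log-concave with bounded support $[\underline{\theta}_1,\overline{\theta}_1]\subset\mathbb{R}_+$ and density $f_1>0$ there; for $t\ge2$, $\theta_t=\alpha_t\theta_{t-1}+\epsilon_t$ with $\alpha_t\in(0,\frac1{2\delta})$ and $\epsilon_t$ independently drawn from a log-concave distribution $G_t$ with bounded support. *)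

theory Defs
  imports "HOL-Probability.Probability"
begin

text \<open>Modified T-period game of the paper, periods are numbered 1..T.

Seller's action in a period in which she has not yet committed:
  Spot p     -- price p for the current period only;
  Commit q   -- public commitment to the prices q s for the periods s = t..T
               (values of q at other indices are irrelevant).\<close>

datatype sact = Spot real | Commit "nat \<Rightarrow> real"

text \<open>Public history up to (and excluding) period t: a list of length t-1 whose
  i-th entry records the seller's action in period i+1 (None if she had already
  committed before, hence took no action) and the buyer's purchase decision.\<close>

type_synonym phist = "(sact option \<times> bool) list"

fun commit_prices :: "phist \<Rightarrow> (nat \<Rightarrow> real) option" where
  "commit_prices [] = None"
| "commit_prices ((Some (Commit q), x) # r) = Some q"
| "commit_prices (e # r) = commit_prices r"

definition committed :: "phist \<Rightarrow> bool" where
  "committed h \<longleftrightarrow> commit_prices h \<noteq> None"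

definition wf_hist :: "phist \<Rightarrow> bool" where
  "wf_hist h \<longleftrightarrow> (\<forall>i < length h. fst (h ! i) = None \<longleftrightarrow> committed (take i h))"

text \<open>Price of the current period t = length h + 1, given the public history h and
  the seller's current action ao (None if she has already committed).\<close>

definition cur_price :: "phist \<Rightarrow> sact option \<Rightarrow> real" where
  "cur_price h ao =
     (case commit_prices h of
        Some q \<Rightarrow> q (length h + 1)
      | None \<Rightarrow> (case ao of
                   Some (Spot p) \<Rightarrow> p
                 | Some (Commit q) \<Rightarrow> q (length h + 1)
                 | None \<Rightarrow> 0))"

text \<open>Expected (optimal) continuation value of the buyer after the public history
  h' (length t), given the realised values \<theta>s = [\<theta>_1,..,\<theta>_t]:
  \<theta>_{t+1} = \<alpha>_{t+1} \<theta>_t + \<epsilon>_{t+1},  \<epsilon>_{t+1} ~ G_{t+1} independent.\<close>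

definition contv :: "(nat \<Rightarrow> real) \<Rightarrow> (nat \<Rightarrow> real measure) \<Rightarrow> (phist \<Rightarrow> real list \<Rightarrow> real)
                     \<Rightarrow> phist \<Rightarrow> real list \<Rightarrow> real" where
  "contv \<alpha> G V h' \<theta>s =
     (\<integral>e. V h' (\<theta>s @ [\<alpha> (length h' + 1) * last \<theta>s + e]) \<partial>(G (length h' + 1)))"

text \<open>Buyer's payoff (from period t on, in period-t units) of decision x at the buyer
  history (h, ao, \<theta>s), when continuing optimally (continuation value V).\<close>

definition Qval :: "real \<Rightarrow> (nat \<Rightarrow> real) \<Rightarrow> (nat \<Rightarrow> real measure) \<Rightarrow> (phist \<Rightarrow> real list \<Rightarrow> real)
                    \<Rightarrow> phist \<Rightarrow> sact option \<Rightarrow> real list \<Rightarrow> bool \<Rightarrow> real" where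
  "Qval \<delta> \<alpha> G V h ao \<theta>s x =
     (if x then last \<theta>s - cur_price h ao else 0) + \<delta> * contv \<alpha> G V (h @ [(ao, x)]) \<theta>s"

text \<open>Buyer's optimal value (Bellman recursion) at the beginning of period
  t = length h + 1 after \<theta>_t has been observed, with m periods remaining,
  against the seller strategy \<sigma> (public history \<mapsto> distribution of actions).\<close>

primrec BV :: "real \<Rightarrow> (nat \<Rightarrow> real) \<Rightarrow> (nat \<Rightarrow> real measure) \<Rightarrow> (phist \<Rightarrow> sact measure)
               \<Rightarrow> nat \<Rightarrow> phist \<Rightarrow> real list \<Rightarrow> real" where
  "BV \<delta> \<alpha> G \<sigma> 0 h \<theta>s = 0"
| "BV \<delta> \<alpha> G \<sigma> (Suc m) h \<theta>s =
     (if committed h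
      then max (Qval \<delta> \<alpha> G (BV \<delta> \<alpha> G \<sigma> m) h None \<theta>s True)
               (Qval \<delta> \<alpha> G (BV \<delta> \<alpha> G \<sigma> m) h None \<theta>s False)
      else (\<integral>a. max (Qval \<delta> \<alpha> G (BV \<delta> \<alpha> G \<sigma> m) h (Some a) \<theta>s True)
                     (Qval \<delta> \<alpha> G (BV \<delta> \<alpha> G \<sigma> m) h (Some a) \<theta>s False) \<partial>(\<sigma> h)))"

definition buyer_optimal :: "nat \<Rightarrow> real \<Rightarrow> (nat \<Rightarrow> real) \<Rightarrow> (nat \<Rightarrow> real measure)
     \<Rightarrow> (phist \<Rightarrow> sact measure) \<Rightarrow> phist \<Rightarrow> sact option \<Rightarrow> real list \<Rightarrow> bool \<Rightarrow> bool" where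
  "buyer_optimal T \<delta> \<alpha> G \<sigma> h ao \<theta>s x \<longleftrightarrow>
     Qval \<delta> \<alpha> G (BV \<delta> \<alpha> G \<sigma> (T - length h - 1)) h ao \<theta>s (\<not> x)
       \<le> Qval \<delta> \<alpha> G (BV \<delta> \<alpha> G \<sigma> (T - length h - 1)) h ao \<theta>s x"

definition log_concave :: "(real \<Rightarrow> real) \<Rightarrow> bool" where
  "log_concave f \<longleftrightarrow> (\<forall>x. 0 \<le> f x) \<and>
     (\<forall>x y l. 0 < l \<and> l < 1 \<longrightarrow> f x powr l * f y powr (1 - l) \<le> f (l * x + (1 - l) * y))"

text \<open>Value histories [\<theta>_1,..,\<theta>_t] in the support: \<theta>_1 \<in> [lo,hi] and
  \<epsilon>_s = \<theta>_s - \<alpha>_s \<theta>_{s-1} \<in> [a_s, b_s] (outside of which the density of G_s vanishes).\<close>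

definition feasible_vals :: "real \<Rightarrow> real \<Rightarrow> (nat \<Rightarrow> real) \<Rightarrow> (nat \<Rightarrow> real) \<Rightarrow> (nat \<Rightarrow> real)
                              \<Rightarrow> real list \<Rightarrow> bool" where
  "feasible_vals lo hi \<alpha> a b \<theta>s \<longleftrightarrow> \<theta>s \<noteq> [] \<and> lo \<le> \<theta>s ! 0 \<and> \<theta>s ! 0 \<le> hi \<and>
     (\<forall>i. 1 \<le> i \<and> i < length \<theta>s \<longrightarrow>
        a (i + 1) \<le> \<theta>s ! i - \<alpha> (i + 1) * \<theta>s ! (i - 1) \<and>
        \<theta>s ! i - \<alpha> (i + 1) * \<theta>s ! (i - 1) \<le> b (i + 1))"

definition expectations_defined :: "nat \<Rightarrow> real \<Rightarrow> (nat \<Rightarrow> real) \<Rightarrow> (nat \<Rightarrow> real measure)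
     \<Rightarrow> (phist \<Rightarrow> sact measure) \<Rightarrow> real \<Rightarrow> real \<Rightarrow> (nat \<Rightarrow> real) \<Rightarrow> (nat \<Rightarrow> real) \<Rightarrow> bool" where
  "expectations_defined T \<delta> \<alpha> G \<sigma> lo hi a b \<longleftrightarrow>
     (\<forall>h ao \<theta>s x. wf_hist h \<and> length h < T \<and> (ao = None \<longleftrightarrow> committed h)
        \<and> feasible_vals lo hi \<alpha> a b \<theta>s \<and> length \<theta>s = length h + 1 \<longrightarrow>
        integrable (G (length h + 2))
          (\<lambda>e. BV \<delta> \<alpha> G \<sigma> (T - length h - 1) (h @ [(ao, x)])
                 (\<theta>s @ [\<alpha> (length h + 2) * last \<theta>s + e]))
      \<and> (\<not> committed h \<longrightarrow>
          integrable (\<sigma> h)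
            (\<lambda>a'. max (Qval \<delta> \<alpha> G (BV \<delta> \<alpha> G \<sigma> (T - length h - 1)) h (Some a') \<theta>s True)
                      (Qval \<delta> \<alpha> G (BV \<delta> \<alpha> G \<sigma> (T - length h - 1)) h (Some a') \<theta>s False))))"

end

theory Submission imports Defs begin

lemma int_bounds:
  fixes f g :: "'a \<Rightarrow> real"
  assumes "prob_space M" "integrable M f" "integrable M g"
    and "AE x in M. l \<le> g x - f x \<and> g x - f x \<le> u"
  shows "l \<le> integral\<^sup>L M g - integral\<^sup>L M f \<and> integral\<^sup>L M g - integral\<^sup>L M f \<le> u"
proof -
  interpret prob_space M by fact
  have e: "integral\<^sup>L M g - integral\<^sup>L M f = (\<integral>x. g x - f x \<partial>M)"
    using assms by simp
  have i: "integrable M (\<lambda>x. g x - f x)" using assms by simp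
  have "(\<integral>x. l \<partial>M) \<le> (\<integral>x. g x - f x \<partial>M)"
    by (rule integral_mono_AE[OF _ i]) (use assms in auto)
  moreover have "(\<integral>x. g x - f x \<partial>M) \<le> (\<integral>x. u \<partial>M)"
    by (rule integral_mono_AE[OF i]) (use assms in auto)
  ultimately show ?thesis unfolding e by (simp add: prob_space)
qed

lemma feas_snoc:
  assumes "feasible_vals lo hi \<alpha> a b \<theta>s"
    and "a (length \<theta>s + 1) \<le> x - \<alpha> (length \<theta>s + 1) * last \<theta>s"
    and "x - \<alpha> (length \<theta>s + 1) * last \<theta>s \<le> b (length \<theta>s + 1)"
  shows "feasible_vals lo hi \<alpha> a b (\<theta>s @ [x])"
proof -
  have ne: "\<theta>s \<noteq> []" using assms(1) by (simp add: feasible_vals_def)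
  have l: "last \<theta>s = \<theta>s ! (length \<theta>s - 1)" using ne by (simp add: last_conv_nth)
  have A: "a (i + 1) \<le> (\<theta>s @ [x]) ! i - \<alpha> (i + 1) * (\<theta>s @ [x]) ! (i - 1) \<and>
          (\<theta>s @ [x]) ! i - \<alpha> (i + 1) * (\<theta>s @ [x]) ! (i - 1) \<le> b (i + 1)"
    if i: "1 \<le> i" "i < length (\<theta>s @ [x])" for i
  proof (cases "i < length \<theta>s")
    case True
    then show ?thesis using assms(1) i by (auto simp: feasible_vals_def nth_append)
  next
    case False
    then have "i = length \<theta>s" using i by simp
    then show ?thesis using assms(2,3) ne l by (auto simp: nth_append)
  qed
  show ?thesis using A assms(1) ne unfolding feasible_vals_def by (auto simp: nth_append)
qed

lemma AE_G:
  fixes G :: "nat \<Rightarrow> real measure" and g :: "nat \<Rightarrow> real \<Rightarrow> real" and a b :: "nat \<Rightarrow> real"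
  assumes "G t = density lborel (\<lambda>x. ennreal (g t x))" "g t \<in> borel_measurable borel"
    and "\<And>x. x < a t \<or> b t < x \<Longrightarrow> g t x = 0"
  shows "AE e in G t. a t \<le> e \<and> e \<le> b t"
proof -
  have m: "(\<lambda>x. ennreal (g t x)) \<in> borel_measurable lborel" using assms(2) by measurable
  show ?thesis unfolding assms(1) AE_density[OF m]
  proof (rule AE_I2, intro impI)
    fix x assume p: "0 < ennreal (g t x)"
    show "a t \<le> x \<and> x \<le> b t"
    proof (rule ccontr)
      assume "\<not> (a t \<le> x \<and> x \<le> b t)"
      then have "g t x = 0" using assms(3) by (meson not_le)
      then show False using p by simp
    qed
  qed

qed

lemma max_bounds:
  fixes x y x' y' L :: real
  assumes "0 \<le> x' - x \<and> x' - x \<le> L" "0 \<le> y' - y \<and> y' - y \<le> L"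
  shows "0 \<le> max x' y' - max x y \<and> max x' y' - max x y \<le> L"
  using assms by (auto simp: max_def)


lemma threshold:
  fixes l D :: "'x \<Rightarrow> real" and c K :: real
  assumes c: "c > 0" and K: "K > 0"
    and H: "\<And>x y. x \<in> X \<Longrightarrow> y \<in> X \<Longrightarrow> l x \<le> l y \<Longrightarrow>
              c * (l y - l x) \<le> D y - D x \<and> D y - D x \<le> K * (l y - l x)"
  shows "\<exists>k. \<forall>x\<in>X. (k \<le> l x \<longrightarrow> 0 \<le> D x) \<and> (l x < k \<longrightarrow> D x \<le> 0)"
proof -
  define P where "P = {l x | x. x \<in> X \<and> 0 \<le> D x}"
  show ?thesis
  proof (cases "P = {}")
    case True
    show ?thesis
    proof (cases "X = {}")
      case True then show ?thesis by auto
    next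
      case False
      then obtain x0 where x0: "x0 \<in> X" by auto
      have neg: "D x < 0" if "x \<in> X" for x using True that unfolding P_def by force
      have "D x0 < 0" using neg x0 .
      have lt: "l x < l x0 - D x0 / c + 1" if x: "x \<in> X" for x
      proof (cases "l x0 \<le> l x")
        case True
        have "c * (l x - l x0) \<le> D x - D x0" using H[OF x0 x True] by simp
        moreover have "D x < 0" using neg x .
        ultimately have "c * (l x - l x0) < - D x0" by simp
        then have "l x - l x0 < - D x0 / c" using c by (simp add: field_simps)
        then show ?thesis by simp
      next
        case False
        have "0 < - D x0 / c" using \<open>D x0 < 0\<close> c by (simp add: divide_neg_pos)
        then show ?thesis using False by simp
      qed
      show ?thesis
        by (rule exI[of _ "l x0 - D x0 / c + 1"]) (use lt neg in \<open>force\<close>)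
    qed
  next
    case False
    then obtain x0 where x0: "x0 \<in> X" "0 \<le> D x0" unfolding P_def by auto
    have bdd: "bdd_below P"
    proof (rule bdd_belowI[of _ "l x0 - D x0 / c"])
      fix p assume "p \<in> P"
      then obtain y where y: "y \<in> X" "0 \<le> D y" "p = l y" unfolding P_def by auto
      show "l x0 - D x0 / c \<le> p"
      proof (cases "l y \<le> l x0")
        case True
        have "c * (l x0 - l y) \<le> D x0 - D y" using H[OF y(1) x0(1) True] by simp
        then have "c * (l x0 - l y) \<le> D x0" using y by simp
        then have "l x0 - l y \<le> D x0 / c" using c by (simp add: field_simps)
        then show ?thesis using y by simp
      next
        case False
        have "0 \<le> D x0 / c" using x0 c by simp
        then show ?thesis using False y by simp
      qed
    qed
    define k where "k = Inf P"
    have A: "D x \<le> 0" if x: "x \<in> X" "l x < k" for x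
    proof (rule ccontr)
      assume "\<not> D x \<le> 0"
      then have "l x \<in> P" unfolding P_def using x by auto
      then have "k \<le> l x" unfolding k_def by (rule cInf_lower[OF _ bdd])
      then show False using x by simp
    qed
    have B: "0 \<le> D x" if x: "x \<in> X" "k \<le> l x" for x
    proof (rule ccontr)
      assume "\<not> 0 \<le> D x"
      then have Dx: "D x < 0" by simp
      define e where "e = - D x / K"
      have e: "0 < e" unfolding e_def using Dx K by (simp add: divide_neg_pos)
      have "Inf P < k + e" unfolding k_def using e by simp
      then obtain p where p: "p \<in> P" "p < k + e" using cInf_less_iff[OF False bdd] by auto
      then obtain y where y: "y \<in> X" "0 \<le> D y" "p = l y" unfolding P_def by auto
      show False
      proof (cases "l y \<le> l x")
        case True
        have "c * (l x - l y) \<le> D x - D y" using H[OF y(1) x(1) True] by simp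
        moreover have "0 \<le> c * (l x - l y)" using c True by simp
        ultimately show False using Dx y by simp
      next
        case False
        then have le: "l x \<le> l y" by simp
        have "D y - D x \<le> K * (l y - l x)" using H[OF x(1) y(1) le] by simp
        moreover have "l y - l x < e" using p y x by simp
        then have "K * (l y - l x) < K * e" using K by simp
        moreover have "K * e = - D x" unfolding e_def using K by simp
        ultimately show False using y by simp
      qed
    qed
    show ?thesis using A B by (intro exI[of _ k]) auto
  qed
qed

lemma wf_snoc:
  assumes "wf_hist h" "ao = None \<longleftrightarrow> committed h"
  shows "wf_hist (h @ [(ao, x)])"
  unfolding wf_hist_def
proof (intro allI impI)
  fix i assume i: "i < length (h @ [(ao, x)])"
  show "(fst ((h @ [(ao, x)]) ! i) = None) = committed (take i (h @ [(ao, x)]))"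
  proof (cases "i < length h")
    case True
    then show ?thesis using assms(1) by (simp add: wf_hist_def nth_append)
  next
    case False
    then have "i = length h" using i by simp
    then show ?thesis using assms(2) by simp
  qed
qed


lemma contv_step:
  fixes V :: "phist \<Rightarrow> real list \<Rightarrow> real" and G :: "nat \<Rightarrow> real measure"
    and \<alpha> a b :: "nat \<Rightarrow> real"
  assumes IH: "\<And>ys ys'. feasible_vals lo hi \<alpha> a b ys \<Longrightarrow> feasible_vals lo hi \<alpha> a b ys' \<Longrightarrow>
        length ys = length h' + 1 \<Longrightarrow> length ys' = length h' + 1 \<Longrightarrow> last ys \<le> last ys' \<Longrightarrow>
        0 \<le> V h' ys' - V h' ys \<and> V h' ys' - V h' ys \<le> 2 * (last ys' - last ys)"
    and f1: "feasible_vals lo hi \<alpha> a b \<theta>s" and f2: "feasible_vals lo hi \<alpha> a b \<theta>s'"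
    and l1: "length \<theta>s = length h'" and l2: "length \<theta>s' = length h'"
    and le: "last \<theta>s \<le> last \<theta>s'"
    and apos: "0 < \<alpha> (length h' + 1)"
    and Gp: "prob_space (G (length h' + 1))"
    and AE: "AE e in G (length h' + 1). a (length h' + 1) \<le> e \<and> e \<le> b (length h' + 1)"
    and i1: "integrable (G (length h' + 1)) (\<lambda>e. V h' (\<theta>s @ [\<alpha> (length h' + 1) * last \<theta>s + e]))"
    and i2: "integrable (G (length h' + 1)) (\<lambda>e. V h' (\<theta>s' @ [\<alpha> (length h' + 1) * last \<theta>s' + e]))"
  shows "0 \<le> contv \<alpha> G V h' \<theta>s' - contv \<alpha> G V h' \<theta>s \<and>
         contv \<alpha> G V h' \<theta>s' - contv \<alpha> G V h' \<theta>s \<le> 2 * \<alpha> (length h' + 1) * (last \<theta>s' - last \<theta>s)"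
proof -
  define t where "t = length h' + 1"
  have "AE e in G t. 0 \<le> V h' (\<theta>s' @ [\<alpha> t * last \<theta>s' + e]) - V h' (\<theta>s @ [\<alpha> t * last \<theta>s + e])
     \<and> V h' (\<theta>s' @ [\<alpha> t * last \<theta>s' + e]) - V h' (\<theta>s @ [\<alpha> t * last \<theta>s + e])
        \<le> 2 * \<alpha> t * (last \<theta>s' - last \<theta>s)"
    using AE unfolding t_def[symmetric]
  proof (rule AE_mp, intro AE_I2 impI)
    fix e assume e: "a t \<le> e \<and> e \<le> b t"
    have F1: "feasible_vals lo hi \<alpha> a b (\<theta>s @ [\<alpha> t * last \<theta>s + e])"
      by (rule feas_snoc[OF f1]) (use e l1 t_def in auto)
    have F2: "feasible_vals lo hi \<alpha> a b (\<theta>s' @ [\<alpha> t * last \<theta>s' + e])"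
      by (rule feas_snoc[OF f2]) (use e l2 t_def in auto)
    have "\<alpha> t * last \<theta>s \<le> \<alpha> t * last \<theta>s'" using apos le t_def by simp
    then have L: "last (\<theta>s @ [\<alpha> t * last \<theta>s + e]) \<le> last (\<theta>s' @ [\<alpha> t * last \<theta>s' + e])" by simp
    have "2 * (last (\<theta>s' @ [\<alpha> t * last \<theta>s' + e]) - last (\<theta>s @ [\<alpha> t * last \<theta>s + e]))
          = 2 * \<alpha> t * (last \<theta>s' - last \<theta>s)" by (simp add: algebra_simps)
    then show "0 \<le> V h' (\<theta>s' @ [\<alpha> t * last \<theta>s' + e]) - V h' (\<theta>s @ [\<alpha> t * last \<theta>s + e])
     \<and> V h' (\<theta>s' @ [\<alpha> t * last \<theta>s' + e]) - V h' (\<theta>s @ [\<alpha> t * last \<theta>s + e])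
        \<le> 2 * \<alpha> t * (last \<theta>s' - last \<theta>s)"
      using IH[OF F1 F2 _ _ L] l1 l2 by simp
  qed
  from int_bounds[OF Gp i1 i2 this[unfolded t_def]] show ?thesis
    unfolding contv_def by simp
qed


context
  fixes T :: nat and \<delta> :: real and \<alpha> :: "nat \<Rightarrow> real"
    and lo hi :: real
    and g :: "nat \<Rightarrow> real \<Rightarrow> real" and a b :: "nat \<Rightarrow> real" and G :: "nat \<Rightarrow> real measure"
    and \<sigma> :: "phist \<Rightarrow> sact measure"
  assumes delta: "0 < \<delta>"
    and alpha: "\<And>t. 2 \<le> t \<Longrightarrow> 0 < \<alpha> t \<and> \<alpha> t < 1 / (2 * \<delta>)"
    and G_def: "\<And>t. 2 \<le> t \<Longrightarrow> G t = density lborel (\<lambda>x. ennreal (g t x))"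
    and G_prob: "\<And>t. 2 \<le> t \<Longrightarrow> prob_space (G t)"
    and g_meas: "\<And>t. 2 \<le> t \<Longrightarrow> g t \<in> borel_measurable borel"
    and g_bdd: "\<And>t x. 2 \<le> t \<Longrightarrow> x < a t \<or> b t < x \<Longrightarrow> g t x = 0"
    and sigma_prob: "\<And>h. prob_space (\<sigma> h)"
    and wd: "expectations_defined T \<delta> \<alpha> G \<sigma> lo hi a b"
begin

lemma C_bound:
  assumes h: "wf_hist h" "length h < T" "ao = None \<longleftrightarrow> committed h"
    and m: "T - length h - 1 = m"
    and IH: "\<And>ys ys'. feasible_vals lo hi \<alpha> a b ys \<Longrightarrow> feasible_vals lo hi \<alpha> a b ys' \<Longrightarrow>
        length ys = length (h @ [(ao, x)]) + 1 \<Longrightarrow> length ys' = length (h @ [(ao, x)]) + 1 \<Longrightarrow>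
        last ys \<le> last ys' \<Longrightarrow>
        0 \<le> BV \<delta> \<alpha> G \<sigma> m (h @ [(ao, x)]) ys' - BV \<delta> \<alpha> G \<sigma> m (h @ [(ao, x)]) ys \<and>
        BV \<delta> \<alpha> G \<sigma> m (h @ [(ao, x)]) ys' - BV \<delta> \<alpha> G \<sigma> m (h @ [(ao, x)]) ys \<le> 2 * (last ys' - last ys)"
    and f1: "feasible_vals lo hi \<alpha> a b \<theta>s" and f2: "feasible_vals lo hi \<alpha> a b \<theta>s'"
    and l1: "length \<theta>s = length h + 1" and l2: "length \<theta>s' = length h + 1"
    and le: "last \<theta>s \<le> last \<theta>s'"
  shows "0 \<le> contv \<alpha> G (BV \<delta> \<alpha> G \<sigma> m) (h @ [(ao, x)]) \<theta>s' - contv \<alpha> G (BV \<delta> \<alpha> G \<sigma> m) (h @ [(ao, x)]) \<theta>s \<and>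
         contv \<alpha> G (BV \<delta> \<alpha> G \<sigma> m) (h @ [(ao, x)]) \<theta>s' - contv \<alpha> G (BV \<delta> \<alpha> G \<sigma> m) (h @ [(ao, x)]) \<theta>s
           \<le> 2 * \<alpha> (length h + 2) * (last \<theta>s' - last \<theta>s)"
proof -
  have eq: "length (h @ [(ao, x)]) + 1 = length h + 2" by simp
  have wd1: "integrable (G (length h + 2))
          (\<lambda>e. BV \<delta> \<alpha> G \<sigma> m (h @ [(ao, x)]) (ys @ [\<alpha> (length h + 2) * last ys + e]))"
    if "feasible_vals lo hi \<alpha> a b ys" "length ys = length h + 1" for ys
    using wd h that m unfolding expectations_defined_def by blast
  define t where "t = length (h @ [(ao, x)]) + 1"
  have t2: "t = length h + 2" unfolding t_def by simp
  have AE: "AE e in G t. a t \<le> e \<and> e \<le> b t"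
  proof (rule AE_G[of G t g a b])
    show "G t = density lborel (\<lambda>x. ennreal (g t x))" using G_def t2 by simp
    show "g t \<in> borel_measurable borel" using g_meas t2 by simp
    show "\<And>x. x < a t \<or> b t < x \<Longrightarrow> g t x = 0" using g_bdd t2 by simp
  qed
  have Gp: "prob_space (G t)" using G_prob t2 by simp
  have ap: "0 < \<alpha> t" using alpha t2 by simp
  have "0 \<le> contv \<alpha> G (BV \<delta> \<alpha> G \<sigma> m) (h @ [(ao, x)]) \<theta>s' - contv \<alpha> G (BV \<delta> \<alpha> G \<sigma> m) (h @ [(ao, x)]) \<theta>s \<and>
         contv \<alpha> G (BV \<delta> \<alpha> G \<sigma> m) (h @ [(ao, x)]) \<theta>s' - contv \<alpha> G (BV \<delta> \<alpha> G \<sigma> m) (h @ [(ao, x)]) \<theta>s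
           \<le> 2 * \<alpha> t * (last \<theta>s' - last \<theta>s)"
    unfolding t_def
    by (rule contv_step[where lo = lo and hi = hi and a = a and b = b and V = "BV \<delta> \<alpha> G \<sigma> m"
         and h' = "h @ [(ao, x)]" and \<alpha> = \<alpha> and G = G and \<theta>s = \<theta>s and \<theta>s' = \<theta>s', OF IH f1 f2 _ _ le])
       (fold t_def, use l1 l2 wd1[OF f1 l1, folded t2] wd1[OF f2 l2, folded t2] AE Gp ap in simp_all)
  then show ?thesis using t2 by simp
qed

lemma dalpha:
  assumes "2 \<le> t" "0 \<le> d"
  shows "\<delta> * (2 * \<alpha> t * d) \<le> d" "0 < \<alpha> t" "\<delta> * (2 * \<alpha> t) < 1"
proof -
  have a: "0 < \<alpha> t" "\<alpha> t < 1 / (2 * \<delta>)" using alpha assms(1) by auto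
  then have "\<alpha> t * (2 * \<delta>) < 1" using delta by (simp add: field_simps)
  then show c: "\<delta> * (2 * \<alpha> t) < 1" by (simp add: algebra_simps)
  have "\<delta> * (2 * \<alpha> t) * d \<le> 1 * d" using c assms(2) by (intro mult_right_mono) auto
  then show "\<delta> * (2 * \<alpha> t * d) \<le> d" by (simp add: algebra_simps)
  show "0 < \<alpha> t" by fact
qed

lemma BV_mono:
  "wf_hist h \<Longrightarrow> length h + n = T \<Longrightarrow> feasible_vals lo hi \<alpha> a b \<theta>s \<Longrightarrow> feasible_vals lo hi \<alpha> a b \<theta>s' \<Longrightarrow>
   length \<theta>s = length h + 1 \<Longrightarrow> length \<theta>s' = length h + 1 \<Longrightarrow> last \<theta>s \<le> last \<theta>s' \<Longrightarrow>
   0 \<le> BV \<delta> \<alpha> G \<sigma> n h \<theta>s' - BV \<delta> \<alpha> G \<sigma> n h \<theta>s \<and>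
   BV \<delta> \<alpha> G \<sigma> n h \<theta>s' - BV \<delta> \<alpha> G \<sigma> n h \<theta>s \<le> 2 * (last \<theta>s' - last \<theta>s)"
proof (induction n arbitrary: h \<theta>s \<theta>s')
  case 0
  then show ?case by simp
next
  case (Suc m)
  have lt: "length h < T" and mT: "T - length h - 1 = m" using Suc.prems(2) by auto
  have D0: "0 \<le> last \<theta>s' - last \<theta>s" using Suc.prems(7) by simp
  have Qb: "0 \<le> Qval \<delta> \<alpha> G (BV \<delta> \<alpha> G \<sigma> m) h ao \<theta>s' x - Qval \<delta> \<alpha> G (BV \<delta> \<alpha> G \<sigma> m) h ao \<theta>s x \<and>
            Qval \<delta> \<alpha> G (BV \<delta> \<alpha> G \<sigma> m) h ao \<theta>s' x - Qval \<delta> \<alpha> G (BV \<delta> \<alpha> G \<sigma> m) h ao \<theta>s x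
              \<le> 2 * (last \<theta>s' - last \<theta>s)"
    if ao: "ao = None \<longleftrightarrow> committed h" for ao x
  proof -
    have wf': "wf_hist (h @ [(ao, x)])" by (rule wf_snoc[OF Suc.prems(1) ao])
    have len': "length (h @ [(ao, x)]) + m = T" using Suc.prems(2) by simp
    have C: "0 \<le> contv \<alpha> G (BV \<delta> \<alpha> G \<sigma> m) (h @ [(ao, x)]) \<theta>s' - contv \<alpha> G (BV \<delta> \<alpha> G \<sigma> m) (h @ [(ao, x)]) \<theta>s \<and>
         contv \<alpha> G (BV \<delta> \<alpha> G \<sigma> m) (h @ [(ao, x)]) \<theta>s' - contv \<alpha> G (BV \<delta> \<alpha> G \<sigma> m) (h @ [(ao, x)]) \<theta>s
           \<le> 2 * \<alpha> (length h + 2) * (last \<theta>s' - last \<theta>s)"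
      by (rule C_bound[OF Suc.prems(1) lt ao mT Suc.IH[OF wf' len'] Suc.prems(3-7)])
    define d where "d = contv \<alpha> G (BV \<delta> \<alpha> G \<sigma> m) (h @ [(ao, x)]) \<theta>s' - contv \<alpha> G (BV \<delta> \<alpha> G \<sigma> m) (h @ [(ao, x)]) \<theta>s"
    have d1: "0 \<le> \<delta> * d" using C delta unfolding d_def by simp
    have "\<delta> * d \<le> \<delta> * (2 * \<alpha> (length h + 2) * (last \<theta>s' - last \<theta>s))"
      using C delta unfolding d_def by (intro mult_left_mono) auto
    also have "\<dots> \<le> last \<theta>s' - last \<theta>s" by (rule dalpha(1)) (use D0 in auto)
    finally have d2: "\<delta> * d \<le> last \<theta>s' - last \<theta>s" .
    have eq: "Qval \<delta> \<alpha> G (BV \<delta> \<alpha> G \<sigma> m) h ao \<theta>s' x - Qval \<delta> \<alpha> G (BV \<delta> \<alpha> G \<sigma> m) h ao \<theta>s x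
       = (if x then last \<theta>s' - last \<theta>s else 0) + \<delta> * d"
      unfolding Qval_def d_def by (simp add: algebra_simps)
    show ?thesis unfolding eq using d1 d2 D0 by auto
  qed
  show ?case
  proof (cases "committed h")
    case True
    then show ?thesis using max_bounds[OF Qb[of None True] Qb[of None False]] by simp
  next
    case False
    have i: "integrable (\<sigma> h) (\<lambda>a'. max (Qval \<delta> \<alpha> G (BV \<delta> \<alpha> G \<sigma> m) h (Some a') ys True)
                                     (Qval \<delta> \<alpha> G (BV \<delta> \<alpha> G \<sigma> m) h (Some a') ys False))"
      if "feasible_vals lo hi \<alpha> a b ys" "length ys = length h + 1" for ys
    proof -
      have "wf_hist h \<and> length h < T \<and> (Some undefined = None \<longleftrightarrow> committed h)
        \<and> feasible_vals lo hi \<alpha> a b ys \<and> length ys = length h + 1"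
        using Suc.prems(1) lt False that by simp
      from wd[unfolded expectations_defined_def, rule_format, OF this] False
      show ?thesis unfolding mT by blast
    qed
    have AE: "AE a' in \<sigma> h. 0 \<le> max (Qval \<delta> \<alpha> G (BV \<delta> \<alpha> G \<sigma> m) h (Some a') \<theta>s' True)
                                     (Qval \<delta> \<alpha> G (BV \<delta> \<alpha> G \<sigma> m) h (Some a') \<theta>s' False)
                        - max (Qval \<delta> \<alpha> G (BV \<delta> \<alpha> G \<sigma> m) h (Some a') \<theta>s True)
                                     (Qval \<delta> \<alpha> G (BV \<delta> \<alpha> G \<sigma> m) h (Some a') \<theta>s False) \<and>
                 max (Qval \<delta> \<alpha> G (BV \<delta> \<alpha> G \<sigma> m) h (Some a') \<theta>s' True)
                                     (Qval \<delta> \<alpha> G (BV \<delta> \<alpha> G \<sigma> m) h (Some a') \<theta>s' False)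
                        - max (Qval \<delta> \<alpha> G (BV \<delta> \<alpha> G \<sigma> m) h (Some a') \<theta>s True)
                                     (Qval \<delta> \<alpha> G (BV \<delta> \<alpha> G \<sigma> m) h (Some a') \<theta>s False)
                 \<le> 2 * (last \<theta>s' - last \<theta>s)"
      by (rule AE_I2, rule max_bounds[OF Qb Qb]) (use False in auto)
    show ?thesis
      using False int_bounds[OF sigma_prob i[OF Suc.prems(3,5)] i[OF Suc.prems(4,6)] AE] by simp
  qed
qed

lemma thr_hao:
  assumes h: "wf_hist h" "length h < T" "ao = None \<longleftrightarrow> committed h"
  shows "\<exists>k. \<forall>\<theta>s. feasible_vals lo hi \<alpha> a b \<theta>s \<and> length \<theta>s = length h + 1 \<longrightarrow>
           buyer_optimal T \<delta> \<alpha> G \<sigma> h ao \<theta>s (k \<le> last \<theta>s)"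
proof -
  define m where "m = T - length h - 1"
  define D where "D ys = Qval \<delta> \<alpha> G (BV \<delta> \<alpha> G \<sigma> m) h ao ys True - Qval \<delta> \<alpha> G (BV \<delta> \<alpha> G \<sigma> m) h ao ys False" for ys
  define X where "X = {ys. feasible_vals lo hi \<alpha> a b ys \<and> length ys = length h + 1}"
  define q where "q = \<delta> * (2 * \<alpha> (length h + 2))"
  have q: "q < 1" "0 < q" unfolding q_def using dalpha(3)[of "length h + 2" 0] dalpha(2)[of "length h + 2" 0] delta
    by auto
  have IH: "0 \<le> BV \<delta> \<alpha> G \<sigma> m (h @ [(ao, x)]) ys' - BV \<delta> \<alpha> G \<sigma> m (h @ [(ao, x)]) ys \<and>
        BV \<delta> \<alpha> G \<sigma> m (h @ [(ao, x)]) ys' - BV \<delta> \<alpha> G \<sigma> m (h @ [(ao, x)]) ys \<le> 2 * (last ys' - last ys)"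
    if "feasible_vals lo hi \<alpha> a b ys" "feasible_vals lo hi \<alpha> a b ys'"
        "length ys = length (h @ [(ao, x)]) + 1" "length ys' = length (h @ [(ao, x)]) + 1"
        "last ys \<le> last ys'" for ys ys' x
    by (rule BV_mono[OF wf_snoc[OF h(1) h(3)] _ that]) (use h(2) m_def in simp)
  have H: "(1 - q) * (last y - last x) \<le> D y - D x \<and> D y - D x \<le> 2 * (last y - last x)"
    if xy: "x \<in> X" "y \<in> X" "last x \<le> last y" for x y
  proof -
    have fx: "feasible_vals lo hi \<alpha> a b x" "length x = length h + 1"
      and fy: "feasible_vals lo hi \<alpha> a b y" "length y = length h + 1" using xy unfolding X_def by auto
    note C1 = C_bound[OF h m_def[symmetric] IH fx(1) fy(1) fx(2) fy(2) xy(3), of True]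
    note C0 = C_bound[OF h m_def[symmetric] IH fx(1) fy(1) fx(2) fy(2) xy(3), of False]
    define d1 where "d1 = contv \<alpha> G (BV \<delta> \<alpha> G \<sigma> m) (h @ [(ao, True)]) y - contv \<alpha> G (BV \<delta> \<alpha> G \<sigma> m) (h @ [(ao, True)]) x"
    define d0 where "d0 = contv \<alpha> G (BV \<delta> \<alpha> G \<sigma> m) (h @ [(ao, False)]) y - contv \<alpha> G (BV \<delta> \<alpha> G \<sigma> m) (h @ [(ao, False)]) x"
    define \<Delta> where "\<Delta> = last y - last x"
    have \<Delta>: "0 \<le> \<Delta>" using xy unfolding \<Delta>_def by simp
    have b1: "0 \<le> \<delta> * d1" "\<delta> * d1 \<le> q * \<Delta>"
      using C1 delta mult_left_mono[of d1 "2 * \<alpha> (length h + 2) * \<Delta>" \<delta>]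
      unfolding d1_def q_def \<Delta>_def by (auto simp: algebra_simps)
    have b0: "0 \<le> \<delta> * d0" "\<delta> * d0 \<le> q * \<Delta>"
      using C0 delta mult_left_mono[of d0 "2 * \<alpha> (length h + 2) * \<Delta>" \<delta>]
      unfolding d0_def q_def \<Delta>_def by (auto simp: algebra_simps)
    have eq: "D y - D x = \<Delta> + \<delta> * d1 - \<delta> * d0"
      unfolding D_def Qval_def d1_def d0_def \<Delta>_def by (simp add: algebra_simps)
    have "q * \<Delta> \<le> 1 * \<Delta>" using q \<Delta> by (intro mult_right_mono) auto
    then show ?thesis unfolding eq \<Delta>_def[symmetric] using b1 b0 by (simp add: algebra_simps)
  qed
  obtain k where k: "\<forall>x\<in>X. (k \<le> last x \<longrightarrow> 0 \<le> D x) \<and> (last x < k \<longrightarrow> D x \<le> 0)"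
    using threshold[of "1 - q" 2 X last D] H q by auto
  show ?thesis
  proof (intro exI[of _ k] allI impI)
    fix ys assume ys: "feasible_vals lo hi \<alpha> a b ys \<and> length ys = length h + 1"
    then have "ys \<in> X" unfolding X_def by simp
    then show "buyer_optimal T \<delta> \<alpha> G \<sigma> h ao ys (k \<le> last ys)"
      using k unfolding buyer_optimal_def m_def[symmetric] D_def
      by (cases "k \<le> last ys") auto
  qed
qed

end

theorem lemma5:
  fixes T :: nat and \<delta> :: real and \<alpha> :: "nat \<Rightarrow> real"
    and lo hi :: real and f1 :: "real \<Rightarrow> real" and F1 :: "real measure"
    and g :: "nat \<Rightarrow> real \<Rightarrow> real" and a b :: "nat \<Rightarrow> real" and G :: "nat \<Rightarrow> real measure"
    and \<sigma> :: "phist \<Rightarrow> sact measure"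
  assumes T: "1 \<le> T"
    and delta: "0 < \<delta>" "\<delta> \<le> 1"
    and F1_def: "F1 = density lborel (\<lambda>x. ennreal (f1 x))" and F1_prob: "prob_space F1"
    and f1_meas: "f1 \<in> borel_measurable borel" and f1_lc: "log_concave f1"
    and supp1: "0 \<le> lo" "lo < hi"
    and f1_pos: "\<And>x. lo \<le> x \<Longrightarrow> x \<le> hi \<Longrightarrow> 0 < f1 x"
    and f1_zero: "\<And>x. x < lo \<or> hi < x \<Longrightarrow> f1 x = 0"
    and alpha: "\<And>t. 2 \<le> t \<Longrightarrow> 0 < \<alpha> t \<and> \<alpha> t < 1 / (2 * \<delta>)"
    and G_def: "\<And>t. 2 \<le> t \<Longrightarrow> G t = density lborel (\<lambda>x. ennreal (g t x))"
    and G_prob: "\<And>t. 2 \<le> t \<Longrightarrow> prob_space (G t)"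
    and g_meas: "\<And>t. 2 \<le> t \<Longrightarrow> g t \<in> borel_measurable borel"
    and g_lc: "\<And>t. 2 \<le> t \<Longrightarrow> log_concave (g t)"
    and g_bdd: "\<And>t x. 2 \<le> t \<Longrightarrow> x < a t \<or> b t < x \<Longrightarrow> g t x = 0"
    and sigma_prob: "\<And>h. prob_space (\<sigma> h)"
    and wd: "expectations_defined T \<delta> \<alpha> G \<sigma> lo hi a b"
  shows "\<exists>k :: phist \<Rightarrow> sact option \<Rightarrow> real.
           \<forall>h ao \<theta>s. wf_hist h \<and> length h < T \<and> (ao = None \<longleftrightarrow> committed h)
              \<and> feasible_vals lo hi \<alpha> a b \<theta>s \<and> length \<theta>s = length h + 1 \<longrightarrow>
              buyer_optimal T \<delta> \<alpha> G \<sigma> h ao \<theta>s (k h ao \<le> last \<theta>s)"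
proof -
  have "\<forall>h ao. \<exists>k. \<forall>\<theta>s. wf_hist h \<and> length h < T \<and> (ao = None \<longleftrightarrow> committed h)
              \<and> feasible_vals lo hi \<alpha> a b \<theta>s \<and> length \<theta>s = length h + 1 \<longrightarrow>
              buyer_optimal T \<delta> \<alpha> G \<sigma> h ao \<theta>s (k \<le> last \<theta>s)"
  proof (intro allI)
    fix h ao
    show "\<exists>k. \<forall>\<theta>s. wf_hist h \<and> length h < T \<and> (ao = None \<longleftrightarrow> committed h)
              \<and> feasible_vals lo hi \<alpha> a b \<theta>s \<and> length \<theta>s = length h + 1 \<longrightarrow>
              buyer_optimal T \<delta> \<alpha> G \<sigma> h ao \<theta>s (k \<le> last \<theta>s)"
    proof (cases "wf_hist h \<and> length h < T \<and> (ao = None \<longleftrightarrow> committed h)")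
      case True
      then obtain k where "\<forall>\<theta>s. feasible_vals lo hi \<alpha> a b \<theta>s \<and> length \<theta>s = length h + 1 \<longrightarrow>
           buyer_optimal T \<delta> \<alpha> G \<sigma> h ao \<theta>s (k \<le> last \<theta>s)"
        using thr_hao[OF delta(1) alpha G_def G_prob g_meas g_bdd sigma_prob wd, of h ao] by blast
      then show ?thesis by blast
    next
      case False
      then show ?thesis by blast
    qed
  qed
  then show ?thesis by metis
qed

end
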